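(* The set $\mathfrak{C}(X;G)=\{C(Y): Y\subseteq X\}$ of canonical centralisers is a sublattice of the centraliser lattice $\mathfrak{C}(G)$. That is, for all $Y_1,Y_2\subseteq X$, both $C(Y_1)\wedge C(Y_2)=C(Y_1)\cap C(Y_2)$ and $C(Y_1)\vee C(Y_2)$ are of the form $C(Z)$ for some $Z\subseteq X$.
   Context: Let $\Gamma$ be a finite simple undirected graph with vertex set $X$, and let $G=G(\Gamma)=\langle X\mid [x,y]=1 \text{ whenever } x,y \text{ are joined by an edge of }\Gamma\rangle$ be the (free) partially commutative group with commutation graph $\Gamma$. For $S\subseteq G$, $C(S)$ is the centraliser of $S$ in $G$. The centraliser lattice $\mathfrak{C}(G)$ is the set of all centralisers $C(S)$, $S\subseteq G$, ordered by inclusion, with meet $C(M_1)\wedge C(M_2)=C(M_1)\cap C(M_2)=C(M_1\cup M_2)$ and join $C(M_1)\vee C(M_2)$ defined as the intersection of all centralisers containing both $C(M_1)$ and $C(M_2)$. A canonical centraliser is a centraliser $C(Y)$ with $Y\subseteq X$. *)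

theory Defs
  imports "HOL-Algebra.Group"
begin

text \<open>Partially commutative groups (right-angled Artin groups) G(Gamma), built as
  the group of equivalence classes of words over the letters X^{+-1}, modulo free
  cancellation and commutation of letters that are joined by an edge of Gamma.
  A letter is a pair (x, b): b = True means x, b = False means x^{-1}.\<close>

type_synonym 'a letter = "'a \<times> bool"

inductive pc_step :: "('a \<Rightarrow> 'a \<Rightarrow> bool) \<Rightarrow> 'a letter list \<Rightarrow> 'a letter list \<Rightarrow> bool"
  for E where
  cancel: "pc_step E (u @ [(x, b), (x, \<not> b)] @ v) (u @ v)"
| commute: "E x y \<Longrightarrow> pc_step E (u @ [(x, b), (y, c)] @ v) (u @ [(y, c), (x, b)] @ v)"

definition pc_words :: "'a set \<Rightarrow> 'a letter list set" where
  "pc_words X = lists (X \<times> UNIV)"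

definition pc_rel :: "'a set \<Rightarrow> ('a \<Rightarrow> 'a \<Rightarrow> bool) \<Rightarrow> ('a letter list \<times> 'a letter list) set" where
  "pc_rel X E = {(u, v). u \<in> pc_words X \<and> v \<in> pc_words X \<and>
      (u, v) \<in> ({(a, b). pc_step E a b} \<union> {(a, b). pc_step E b a})\<^sup>*}"

definition pc_group :: "'a set \<Rightarrow> ('a \<Rightarrow> 'a \<Rightarrow> bool) \<Rightarrow> 'a letter list set monoid" where
  "pc_group X E = \<lparr> carrier = pc_words X // pc_rel X E,
      mult = (\<lambda>A B. pc_rel X E `` {(SOME u. u \<in> A) @ (SOME v. v \<in> B)}),
      one = pc_rel X E `` {[]} \<rparr>"

definition pc_gen :: "'a set \<Rightarrow> ('a \<Rightarrow> 'a \<Rightarrow> bool) \<Rightarrow> 'a \<Rightarrow> 'a letter list set" where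
  "pc_gen X E x = pc_rel X E `` {[(x, True)]}"

definition centraliser :: "('g, 'b) monoid_scheme \<Rightarrow> 'g set \<Rightarrow> 'g set" where
  "centraliser G S = {g \<in> carrier G. \<forall>s \<in> S. g \<otimes>\<^bsub>G\<^esub> s = s \<otimes>\<^bsub>G\<^esub> g}"

definition centraliser_lattice :: "('g, 'b) monoid_scheme \<Rightarrow> 'g set set" where
  "centraliser_lattice G = {centraliser G S | S. S \<subseteq> carrier G}"

definition cjoin :: "('g, 'b) monoid_scheme \<Rightarrow> 'g set \<Rightarrow> 'g set \<Rightarrow> 'g set" where
  "cjoin G A B = \<Inter> {C \<in> centraliser_lattice G. A \<subseteq> C \<and> B \<subseteq> C}"

definition canonical_centraliser :: "'a set \<Rightarrow> ('a \<Rightarrow> 'a \<Rightarrow> bool) \<Rightarrow> 'a set \<Rightarrow> 'a letter list set set" where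
  "canonical_centraliser X E Y = centraliser (pc_group X E) (pc_gen X E ` Y)"

end

theory Submission
  imports Defs
begin


definition cancI :: "('a \<Rightarrow> 'a \<Rightarrow> bool) \<Rightarrow> 'a letter list \<Rightarrow> nat \<Rightarrow> nat \<Rightarrow> bool" where
  "cancI E w i j \<longleftrightarrow> i < j \<and> j < length w \<and> fst (w!j) = fst (w!i) \<and> snd (w!j) = (\<not> snd (w!i))
     \<and> (\<forall>k. i < k \<and> k < j \<longrightarrow> E (fst (w!i)) (fst (w!k)))"

definition rem :: "'b list \<Rightarrow> nat \<Rightarrow> nat \<Rightarrow> 'b list" where
  "rem w i j = take i w @ take (j - Suc i) (drop (Suc i) w) @ drop (Suc j) w"

definition swp :: "'b list \<Rightarrow> nat \<Rightarrow> 'b list" where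
  "swp w p = w[p := w!Suc p, Suc p := w!p]"

definition swI :: "('a \<Rightarrow> 'a \<Rightarrow> bool) \<Rightarrow> 'a letter list \<Rightarrow> nat \<Rightarrow> bool" where
  "swI E w p \<longleftrightarrow> Suc p < length w \<and> E (fst (w!p)) (fst (w!Suc p))"

lemma length_rem: "i < j \<Longrightarrow> j < length w \<Longrightarrow> length (rem w i j) = length w - 2"
  unfolding rem_def by auto

lemma nth_rem: "i < j \<Longrightarrow> j < length w \<Longrightarrow> n < length w - 2 \<Longrightarrow>
   rem w i j ! n = w ! (if n < i then n else if Suc n < j then Suc n else Suc (Suc n))"
  unfolding rem_def by (auto simp: nth_append min_def)

lemma length_swp[simp]: "length (swp w p) = length w"
  unfolding swp_def by simp

lemma nth_swp: "Suc p < length w \<Longrightarrow> n < length w \<Longrightarrow>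
   swp w p ! n = w ! (if n = p then Suc p else if n = Suc p then p else n)"
  unfolding swp_def by (auto simp: nth_list_update)


lemma nth_rem_lo: "i < j \<Longrightarrow> j < length w \<Longrightarrow> n < i \<Longrightarrow> rem w i j ! n = w ! n"
  by (simp add: nth_rem)
lemma nth_rem_mid: "i < j \<Longrightarrow> j < length w \<Longrightarrow> i \<le> n \<Longrightarrow> Suc n < j \<Longrightarrow> rem w i j ! n = w ! Suc n"
  by (simp add: nth_rem)
lemma nth_rem_hi: "i < j \<Longrightarrow> j < length w \<Longrightarrow> j \<le> Suc n \<Longrightarrow> n + 2 < length w \<Longrightarrow> rem w i j ! n = w ! (n + 2)"
  by (simp add: nth_rem)


lemma P2:
  assumes sym: "\<And>x y. E x y \<Longrightarrow> E y x" and irr: "\<And>x. \<not> E x x"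
    and sw: "swI E w p" and c: "cancI E w i j"
  shows "\<exists>i' j'. cancI E (swp w p) i' j' \<and> (rem (swp w p) i' j' = rem w i j \<or>
     (\<exists>q. swI E (rem w i j) q \<and> rem (swp w p) i' j' = swp (rem w i j) q))"
proof -
  from sw have p: "Suc p < length w" and Ep: "E (fst (w!p)) (fst (w!Suc p))" by (auto simp: swI_def)
  from c have ij: "i < j" "j < length w" and cj: "fst (w!j) = fst (w!i)" "snd (w!j) = (\<not> snd (w!i))"
    and btw: "\<And>k. i < k \<Longrightarrow> k < j \<Longrightarrow> E (fst (w!i)) (fst (w!k))" by (auto simp: cancI_def)
  consider "Suc p < i" | "p > j" | "i < p \<and> Suc p < j" | "Suc p = i" | "p = i \<and> Suc p < j"
    | "p = i \<and> Suc p = j" | "Suc p = j \<and> p > i" | "p = j" by linarith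
  then show ?thesis
  proof cases
    case 1
    have "cancI E (swp w p) i j" using c p 1 unfolding cancI_def by (auto simp: nth_swp)
    moreover have "swI E (rem w i j) p" using sw 1 ij unfolding swI_def
      by (auto simp: nth_rem length_rem)
    moreover have "rem (swp w p) i j = swp (rem w i j) p"
      using 1 ij p by (auto intro!: nth_equalityI simp: nth_rem length_rem nth_swp; metis less_antisym not_less_eq)
    ultimately show ?thesis by blast
  next
    case 2
    have "cancI E (swp w p) i j" using c p 2 unfolding cancI_def by (auto simp: nth_swp)
    moreover have "swI E (rem w i j) (p - 2)"
    proof -
      have "rem w i j ! (p - 2) = w!(p - 2 + 2)" "rem w i j ! Suc (p - 2) = w ! (Suc (p - 2) + 2)"
        using 2 ij p by (intro nth_rem_hi; simp)+
      moreover have pp: "Suc (Suc (p - 2)) = p" using 2 ij by linarith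
      ultimately show ?thesis using Ep 2 ij p by (simp add: swI_def length_rem)
    qed
    moreover have "rem (swp w p) i j = swp (rem w i j) (p - 2)"
      using 2 ij p by (auto intro!: nth_equalityI simp: nth_rem length_rem nth_swp; metis less_antisym not_less_eq)
    ultimately show ?thesis by blast
  next
    case 3
    have "cancI E (swp w p) i j" using c p 3 unfolding cancI_def by (auto simp: nth_swp)
    moreover have "swI E (rem w i j) (p - 1)"
    proof -
      have "rem w i j ! (p - 1) = w!Suc (p - 1)"
        using 3 ij p by (intro nth_rem_mid) auto
      moreover have "rem w i j ! Suc (p - 1) = w ! Suc (Suc (p - 1))"
        using 3 ij p by (intro nth_rem_mid) auto
      moreover have pp: "Suc (p - 1) = p" using 3 by linarith
      ultimately
      show ?thesis using Ep 3 ij p by (simp add: swI_def length_rem) linarith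
    qed
    moreover have "rem (swp w p) i j = swp (rem w i j) (p - 1)"
      using 3 ij p by (auto intro!: nth_equalityI simp: nth_rem length_rem nth_swp; metis less_antisym not_less_eq)
    ultimately show ?thesis by blast
  next
    case 4
    have "cancI E (swp w p) p j" using c p 4 Ep sym unfolding cancI_def
      by (auto simp: nth_swp; metis Suc_lessI less_antisym)
    moreover have "rem (swp w p) p j = rem w i j"
      using 4 ij p by (auto intro!: nth_equalityI simp: nth_rem length_rem nth_swp; metis less_antisym not_less_eq)
    ultimately show ?thesis by blast
  next
    case 5
    have "cancI E (swp w p) (Suc i) j" using c p 5 Ep sym unfolding cancI_def
      by (auto simp: nth_swp; metis Suc_lessI less_antisym)
    moreover have "rem (swp w p) (Suc i) j = rem w i j"
      using 5 ij p by (auto intro!: nth_equalityI simp: nth_rem length_rem nth_swp; metis less_antisym not_less_eq)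
    ultimately show ?thesis by blast
  next
    case 6
    then have False using Ep cj irr by auto
    then show ?thesis ..
  next
    case 7
    have "cancI E (swp w p) i p" using c p 7 Ep sym unfolding cancI_def
      by (auto simp: nth_swp)
    moreover have "rem (swp w p) i p = rem w i j"
      using 7 ij p by (auto intro!: nth_equalityI simp: nth_rem length_rem nth_swp; metis less_antisym not_less_eq)
    ultimately show ?thesis by blast
  next
    case 8
    have "cancI E (swp w p) i (Suc j)" using c p 8 Ep sym unfolding cancI_def
      by (auto simp: nth_swp; metis Suc_lessI less_antisym)
    moreover have "rem (swp w p) i (Suc j) = rem w i j"
      using 8 ij p by (auto intro!: nth_equalityI simp: nth_rem length_rem nth_swp; metis less_antisym not_less_eq)
    ultimately show ?thesis by blast
  qed
qed



definition fidx :: "nat \<Rightarrow> nat \<Rightarrow> nat \<Rightarrow> nat" where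
  "fidx i j n = (if n < i then n else if Suc n < j then Suc n else Suc (Suc n))"
definition rn :: "nat \<Rightarrow> nat \<Rightarrow> nat \<Rightarrow> nat" where
  "rn i j k = (if k < i then k else if k < j then k - 1 else k - 2)"
lemma fidx_rn: "i < j \<Longrightarrow> k \<noteq> i \<Longrightarrow> k \<noteq> j \<Longrightarrow> fidx i j (rn i j k) = k"
  unfolding fidx_def rn_def by auto
lemma fidx_fidx:
  assumes "i < j" "k < l" "k \<noteq> i" "k \<noteq> j" "l \<noteq> i" "l \<noteq> j"
  shows "fidx i j (fidx (rn i j k) (rn i j l) n) = fidx k l (fidx (rn k l i) (rn k l j) n)"
proof -
  consider "j < k" | "i < k \<and> k < j \<and> j < l" | "i < k \<and> l < j" | "l < i" | "k < i \<and> i < l \<and> l < j" | "k < i \<and> j < l"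
    using assms by linarith
  then show ?thesis using assms by cases (auto simp: rn_def fidx_def)
qed

lemma nth_rem_f: "i < j \<Longrightarrow> j < length w \<Longrightarrow> n < length w - 2 \<Longrightarrow> rem w i j ! n = w ! fidx i j n"
  unfolding fidx_def by (rule nth_rem)

lemma rn_lt: "i < j \<Longrightarrow> j < length w \<Longrightarrow> k < length w \<Longrightarrow> k \<noteq> i \<Longrightarrow> k \<noteq> j \<Longrightarrow> rn i j k < length w - 2"
  unfolding rn_def by auto

lemma nth_rem_rn: "i < j \<Longrightarrow> j < length w \<Longrightarrow> k < length w \<Longrightarrow> k \<noteq> i \<Longrightarrow> k \<noteq> j \<Longrightarrow>
  rem w i j ! rn i j k = w ! k"
  using nth_rem_f[of i j w "rn i j k"] rn_lt[of i j w k] fidx_rn[of i j k] by simp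

lemma canc_disj:
  assumes c1: "cancI E w i j" and c2: "cancI E w k l" and d: "k \<noteq> i" "k \<noteq> j" "l \<noteq> i" "l \<noteq> j"
  shows "cancI E (rem w i j) (rn i j k) (rn i j l)"
proof -
  from c1 have ij: "i < j" "j < length w" by (auto simp: cancI_def)
  from c2 have kl: "k < l" "l < length w" and cj: "fst (w!l) = fst (w!k)" "snd (w!l) = (\<not> snd (w!k))"
    and btw: "\<And>m. k < m \<Longrightarrow> m < l \<Longrightarrow> E (fst (w!k)) (fst (w!m))" by (auto simp: cancI_def)
  have a: "rn i j k < length w - 2" "rem w i j ! rn i j k = w ! k"
    using nth_rem_rn[OF ij] rn_lt[OF ij] kl d by auto
  have b: "rn i j l < length w - 2" "rem w i j ! rn i j l = w ! l"
    using nth_rem_rn[OF ij] rn_lt[OF ij] kl d by auto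
  have lt: "rn i j k < rn i j l" using kl d ij unfolding rn_def by auto
  have "E (fst (w!k)) (fst (rem w i j ! m))" if "rn i j k < m" "m < rn i j l" for m
  proof -
    have m: "m < length w - 2" using that b by linarith
    have "rem w i j ! m = w ! fidx i j m"
      using nth_rem_f[OF ij m] .
    moreover have "k < fidx i j m" "fidx i j m < l"
      using that d kl ij unfolding rn_def fidx_def by (auto split: if_splits)
    ultimately show ?thesis using btw by simp
  qed
  then show ?thesis using a b lt cj ij unfolding cancI_def by (simp add: length_rem)
qed

lemma rem_rem_disj:
  assumes ij: "i < j" "j < length w" and kl: "k < l" "l < length w"
    and d: "k \<noteq> i" "k \<noteq> j" "l \<noteq> i" "l \<noteq> j"
  shows "rem (rem w i j) (rn i j k) (rn i j l) = rem (rem w k l) (rn k l i) (rn k l j)"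
proof (rule nth_equalityI)
  have lt1: "rn i j k < rn i j l" "rn i j l < length w - 2" using kl d ij unfolding rn_def by auto
  have lt2: "rn k l i < rn k l j" "rn k l j < length w - 2" using kl d ij unfolding rn_def by auto
  show "length (rem (rem w i j) (rn i j k) (rn i j l)) = length (rem (rem w k l) (rn k l i) (rn k l j))"
    using lt1 lt2 ij kl by (simp add: length_rem)
  fix n assume "n < length (rem (rem w i j) (rn i j k) (rn i j l))"
  then have n: "n < length w - 4" using lt1 ij by (simp add: length_rem)
  have f1: "fidx (rn i j k) (rn i j l) n < length w - 2" "fidx (rn k l i) (rn k l j) n < length w - 2"
    using n lt1 lt2 unfolding fidx_def by auto
  have "rem (rem w i j) (rn i j k) (rn i j l) ! n = rem w i j ! fidx (rn i j k) (rn i j l) n"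
    using lt1 n ij by (intro nth_rem_f) (auto simp: length_rem)
  also have "\<dots> = w ! fidx i j (fidx (rn i j k) (rn i j l) n)"
    using f1 ij by (intro nth_rem_f) auto
  also have "\<dots> = w ! fidx k l (fidx (rn k l i) (rn k l j) n)"
    using fidx_fidx[OF ij(1) kl(1) d] by simp
  also have "\<dots> = rem w k l ! fidx (rn k l i) (rn k l j) n"
    using f1 kl by (intro nth_rem_f[symmetric]) auto
  also have "\<dots> = rem (rem w k l) (rn k l i) (rn k l j) ! n"
    using lt2 n kl by (intro nth_rem_f[symmetric]) (auto simp: length_rem)
  finally show "rem (rem w i j) (rn i j k) (rn i j l) ! n = rem (rem w k l) (rn k l i) (rn k l j) ! n" .
qed



definition red :: "('a \<Rightarrow> 'a \<Rightarrow> bool) \<Rightarrow> 'a letter list \<Rightarrow> 'a letter list \<Rightarrow> bool" where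
  "red E u v \<longleftrightarrow> (\<exists>i j. cancI E u i j \<and> v = rem u i j)"

definition sw :: "('a \<Rightarrow> 'a \<Rightarrow> bool) \<Rightarrow> 'a letter list \<Rightarrow> 'a letter list \<Rightarrow> bool" where
  "sw E u v \<longleftrightarrow> (\<exists>p. swI E u p \<and> v = swp u p)"

abbreviation csim where "csim E \<equiv> (sw E)\<^sup>*\<^sup>*"

lemma sw_sym: assumes sym: "\<And>x y. E x y \<Longrightarrow> E y x" and "sw E u v" shows "sw E v u"
proof -
  from assms obtain p where p: "swI E u p" "v = swp u p" by (auto simp: sw_def)
  have "swI E v p" using p sym by (auto simp: swI_def nth_swp)
  moreover have "u = swp v p" using p
    by (auto intro!: nth_equalityI simp: nth_swp swI_def)
  ultimately show ?thesis by (auto simp: sw_def)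
qed

lemma csim_sym: assumes sym: "\<And>x y. E x y \<Longrightarrow> E y x" and "csim E u v" shows "csim E v u"
  using assms(2)
proof induction
  case base then show ?case by simp
next
  case (step y z)
  have "sw E z y" using sw_sym[OF sym step(2)] .
  then show ?case using step(3) by (meson converse_rtranclp_into_rtranclp)
qed

lemma sw_app: "E (fst a) (fst b) \<Longrightarrow> sw E (p @ a # b # q) (p @ b # a # q)"
  unfolding sw_def swI_def swp_def
  by (rule exI[of _ "length p"]) (simp add: list_update_append nth_append)

lemma csim_app: "csim E u v \<Longrightarrow> csim E (p @ u @ q) (p @ v @ q)"
proof (induction rule: rtranclp_induct)
  case base then show ?case by simp
next
  case (step y z)
  from step(2) obtain r where r: "swI E y r" "z = swp y r" by (auto simp: sw_def)
  have "sw E (p @ y @ q) (p @ z @ q)" unfolding sw_def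
  proof (rule exI[of _ "length p + r"])
    show "swI E (p @ y @ q) (length p + r) \<and> p @ z @ q = swp (p @ y @ q) (length p + r)"
      using r by (auto simp: swI_def nth_append swp_def list_update_append)
  qed
  then show ?case using step(3) by simp
qed

lemma csim_move: "(\<forall>m\<in>set M. E (fst a) (fst m)) \<Longrightarrow> csim E (p @ a # M @ q) (p @ M @ a # q)"
proof (induction M arbitrary: p)
  case Nil then show ?case by simp
next
  case (Cons m M)
  have "sw E (p @ a # m # (M @ q)) (p @ m # a # (M @ q))" using Cons.prems by (intro sw_app) simp
  moreover have "csim E (p @ m # a # M @ q) (p @ m # M @ a # q)" using Cons.IH[of "p @ [m]"] Cons.prems by simp
  ultimately have "csim E (p @ a # m # (M @ q)) (p @ m # M @ a # q)"
    by (rule converse_rtranclp_into_rtranclp)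
  then show ?case by simp
qed

lemma chain_case:
  assumes c1: "cancI E w i j" and c2: "cancI E w j l"
  shows "csim E (rem w j l) (rem w i j)"
proof -
  from c1 have ij: "i < j" "j < length w" and cj: "fst (w!j) = fst (w!i)" "snd (w!j) = (\<not> snd (w!i))"
    and b1: "\<And>m. i < m \<Longrightarrow> m < j \<Longrightarrow> E (fst (w!i)) (fst (w!m))" by (auto simp: cancI_def)
  from c2 have jl: "j < l" "l < length w" and cl: "fst (w!l) = fst (w!j)" "snd (w!l) = (\<not> snd (w!j))"
    and b2: "\<And>m. j < m \<Longrightarrow> m < l \<Longrightarrow> E (fst (w!j)) (fst (w!m))" by (auto simp: cancI_def)
  have wl: "w!l = w!i" using cj cl by (simp add: prod_eq_iff)
  define A where "A = take (j - Suc i) (drop (Suc i) w)"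
  define B where "B = take (l - Suc j) (drop (Suc j) w)"
  define D where "D = drop (Suc l) w"
  have tj: "take j w = take i w @ w!i # A"
  proof -
    have "take j w = take (Suc i + (j - Suc i)) w" using ij by simp
    also have "\<dots> = take (Suc i) w @ A" unfolding A_def by (rule take_add)
    also have "take (Suc i) w = take i w @ [w!i]" using ij by (simp add: take_Suc_conv_app_nth)
    finally show ?thesis by simp
  qed
  have dj: "drop (Suc j) w = B @ w!l # D"
  proof -
    have "drop (Suc j) w = B @ drop (l - Suc j) (drop (Suc j) w)" unfolding B_def by (rule append_take_drop_id[symmetric])
    also have "drop (l - Suc j) (drop (Suc j) w) = drop l w" using jl by simp
    also have "drop l w = w!l # D" unfolding D_def using jl by (simp add: Cons_nth_drop_Suc)
    finally show ?thesis .
  qed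
  have r1: "rem w i j = take i w @ A @ B @ w!i # D"
    unfolding rem_def A_def[symmetric] dj wl by simp
  have r2: "rem w j l = take i w @ w!i # (A @ B) @ D"
    unfolding rem_def B_def[symmetric] D_def[symmetric] tj by simp
  have "\<forall>m\<in>set (A @ B). E (fst (w!i)) (fst m)"
  proof
    fix m assume "m \<in> set (A @ B)"
    then consider "m \<in> set A" | "m \<in> set B" by auto
    then show "E (fst (w!i)) (fst m)"
    proof cases
      case 1
      then obtain t where "t < length A" "m = A ! t" by (auto simp: in_set_conv_nth)
      then show ?thesis unfolding A_def using ij by (auto intro!: b1)
    next
      case 2
      then obtain t where "t < length B" "m = B ! t" by (auto simp: in_set_conv_nth)
      then show ?thesis unfolding B_def using jl cj b2 by auto
    qed
  qed
  from csim_move[where E=E and M="A @ B" and a="w!i" and p="take i w" and q=D, OF this] show ?thesis unfolding r1 r2 by simp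
qed



definition irr :: "('a \<Rightarrow> 'a \<Rightarrow> bool) \<Rightarrow> 'a letter list \<Rightarrow> bool" where
  "irr E w \<longleftrightarrow> \<not> (\<exists>i j. cancI E w i j)"

lemma P3:
  assumes sym: "\<And>x y. E x y \<Longrightarrow> E y x" and ir: "\<And>x. \<not> E x x"
    and c1: "cancI E w i j" and c2: "cancI E w k l"
  shows "\<exists>v1 v2. (red E)\<^sup>=\<^sup>= (rem w i j) v1 \<and> (red E)\<^sup>=\<^sup>= (rem w k l) v2 \<and> csim E v1 v2"
proof -
  from c1 have ij: "i < j" "j < length w" and cj: "fst (w!j) = fst (w!i)" "snd (w!j) = (\<not> snd (w!i))"
    and b1: "\<And>m. i < m \<Longrightarrow> m < j \<Longrightarrow> E (fst (w!i)) (fst (w!m))" by (auto simp: cancI_def)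
  from c2 have kl: "k < l" "l < length w" and cl: "fst (w!l) = fst (w!k)" "snd (w!l) = (\<not> snd (w!k))"
    and b2: "\<And>m. k < m \<Longrightarrow> m < l \<Longrightarrow> E (fst (w!k)) (fst (w!m))" by (auto simp: cancI_def)
  consider "i = k" | "l = j \<and> i \<noteq> k" | "k = j" | "l = i" | "k \<noteq> i" "k \<noteq> j" "l \<noteq> i" "l \<noteq> j"
    by blast
  then show ?thesis
  proof cases
    case 1
    have "j = l"
    proof (rule ccontr)
      assume "j \<noteq> l"
      then consider "j < l" | "l < j" by linarith
      then show False
      proof cases
        case 1 then show False using b2[of j] ij \<open>i = k\<close> cj ir by auto
      next
        case 2 then show False using b1[of l] kl \<open>i = k\<close> cl ir by auto
      qed
    qed
    then show ?thesis using 1 by blast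
  next
    case 2
    then consider "i < k" | "k < i" by linarith
    then have False
    proof cases
      case 1 then show False using b1[of k] kl 2 cl cj ir by auto
    next
      case 2 then show False using b2[of i] ij \<open>l = j \<and> i \<noteq> k\<close> cl cj ir by auto
    qed
    then show ?thesis ..
  next
    case 3
    have "csim E (rem w k l) (rem w i j)" using chain_case[OF c1] c2 3 by simp
    then have "csim E (rem w i j) (rem w k l)" using csim_sym[of E, OF sym] by blast
    then show ?thesis by blast
  next
    case 4
    have "csim E (rem w i j) (rem w k l)" using chain_case[OF c2] c1 4 by simp
    then show ?thesis by blast
  next
    case 5
    have "red E (rem w i j) (rem (rem w i j) (rn i j k) (rn i j l))"
      using canc_disj[OF c1 c2 5] unfolding red_def by blast
    moreover have "cancI E (rem w k l) (rn k l i) (rn k l j)"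
      by (rule canc_disj[OF c2 c1]) (use 5 in auto)
    then have "red E (rem w k l) (rem (rem w k l) (rn k l i) (rn k l j))"
      unfolding red_def by blast
    moreover have "rem (rem w i j) (rn i j k) (rn i j l) = rem (rem w k l) (rn k l i) (rn k l j)"
      using rem_rem_disj[OF ij kl 5] .
    ultimately show ?thesis
      by (intro exI[of _ "rem (rem w i j) (rn i j k) (rn i j l)"]) auto
  qed
qed

lemma red_length: "red E u v \<Longrightarrow> length v < length u"
  unfolding red_def cancI_def by (auto simp: length_rem)

lemma csim_length: "csim E u v \<Longrightarrow> length v = length u"
  by (induction rule: rtranclp_induct) (auto simp: sw_def)

lemma red_star_length: "(red E)\<^sup>*\<^sup>* u v \<Longrightarrow> length v \<le> length u"
  by (induction rule: rtranclp_induct) (auto dest: red_length)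

lemma csim_red:
  assumes sym: "\<And>x y. E x y \<Longrightarrow> E y x" and ir: "\<And>x. \<not> E x x"
  shows "csim E w w' \<Longrightarrow> red E w w1 \<Longrightarrow> \<exists>w1'. red E w' w1' \<and> csim E w1 w1'"
proof (induction w' rule: rtranclp_induct)
  case base then show ?case by blast
next
  case (step y z)
  then obtain y1 where y1: "red E y y1" "csim E w1 y1" by blast
  from y1(1) obtain i j where c: "cancI E y i j" "y1 = rem y i j" by (auto simp: red_def)
  from step(2) obtain p where p: "swI E y p" "z = swp y p" by (auto simp: sw_def)
  from P2[OF sym ir p(1) c(1)] obtain i' j' where
    c': "cancI E (swp y p) i' j'" and
    e: "rem (swp y p) i' j' = rem y i j \<or> (\<exists>q. swI E (rem y i j) q \<and> rem (swp y p) i' j' = swp (rem y i j) q)"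
    by blast
  have r: "red E z (rem (swp y p) i' j')" using c' p by (auto simp: red_def)
  have "csim E y1 (rem (swp y p) i' j')"
  proof (cases "rem (swp y p) i' j' = rem y i j")
    case True then show ?thesis using c(2) by simp
  next
    case False
    then have "sw E y1 (rem (swp y p) i' j')" using e c(2) unfolding sw_def by blast
    then show ?thesis by (rule r_into_rtranclp)
  qed
  then show ?case using r y1(2) by (meson rtranclp_trans)
qed

lemma nf_exists: "\<exists>n. (red E)\<^sup>*\<^sup>* w n \<and> irr E n"
proof (induction "length w" arbitrary: w rule: less_induct)
  case less
  show ?case
  proof (cases "irr E w")
    case True then show ?thesis by blast
  next
    case False
    then obtain i j where "cancI E w i j" by (auto simp: irr_def)
    then have r: "red E w (rem w i j)" by (auto simp: red_def)
    from less[OF red_length[OF r]] obtain n where "(red E)\<^sup>*\<^sup>* (rem w i j) n" "irr E n" by blast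
    then show ?thesis using r by (meson converse_rtranclp_into_rtranclp)
  qed
qed

lemma irr_red_star: "irr E w \<Longrightarrow> (red E)\<^sup>*\<^sup>* w n \<Longrightarrow> n = w"
  by (erule converse_rtranclpE) (auto simp: irr_def red_def)

lemma irr_red: "irr E w \<longleftrightarrow> \<not> (\<exists>v. red E w v)"
  by (auto simp: irr_def red_def)

lemma first_step: "(red E)\<^sup>*\<^sup>* w n \<Longrightarrow> irr E n \<Longrightarrow> \<not> irr E w \<Longrightarrow> \<exists>w1. red E w w1 \<and> (red E)\<^sup>*\<^sup>* w1 n"
  by (erule converse_rtranclpE) auto

lemma Q:
  assumes sym: "\<And>x y. E x y \<Longrightarrow> E y x" and ir: "\<And>x. \<not> E x x"
  shows "csim E w w' \<Longrightarrow> (red E)\<^sup>*\<^sup>* w n \<Longrightarrow> irr E n \<Longrightarrow> (red E)\<^sup>*\<^sup>* w' n' \<Longrightarrow> irr E n' \<Longrightarrow> csim E n n'"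
proof (induction "length w" arbitrary: w w' n n' rule: less_induct)
  case less
  show ?case
  proof (cases "irr E w")
    case True
    have "irr E w'"
    proof (rule ccontr)
      assume "\<not> irr E w'"
      then obtain v where "red E w' v" by (auto simp: irr_red)
      from csim_red[OF sym ir csim_sym[OF sym less(2)] this] True show False by (auto simp: irr_red)
    qed
    then have "n' = w'" using irr_red_star less(5) by blast
    moreover have "n = w" using irr_red_star[OF True less(3)] .
    ultimately show ?thesis using less(2) by simp
  next
    case False
    from less(3) False obtain w1a where w1a: "red E w w1a" "(red E)\<^sup>*\<^sup>* w1a n"
      using first_step[OF less(3) less(4) False] by blast
    from csim_red[OF sym ir less(2) w1a(1)] obtain w1b where w1b: "red E w' w1b" "csim E w1a w1b" by blast
    have "\<not> irr E w'" using w1b by (auto simp: irr_red)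
    with less(5) obtain w2a where w2a: "red E w' w2a" "(red E)\<^sup>*\<^sup>* w2a n'"
      using first_step[OF less(5) less(6)] by blast
    from w1b(1) obtain i j where cij: "cancI E w' i j" "w1b = rem w' i j" by (auto simp: red_def)
    from w2a(1) obtain k l where ckl: "cancI E w' k l" "w2a = rem w' k l" by (auto simp: red_def)
    from P3[OF sym ir cij(1) ckl(1)] cij(2) ckl(2) obtain v1 v2 where
      v: "(red E)\<^sup>=\<^sup>= w1b v1" "(red E)\<^sup>=\<^sup>= w2a v2" "csim E v1 v2" by blast
    obtain m1 where m1: "(red E)\<^sup>*\<^sup>* v1 m1" "irr E m1" using nf_exists by blast
    obtain m2 where m2: "(red E)\<^sup>*\<^sup>* v2 m2" "irr E m2" using nf_exists by blast
    have lw': "length w' = length w" using csim_length[OF less(2)] .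
    have l1: "length w1a < length w" using red_length[OF w1a(1)] .
    have l1b: "length w1b < length w" using red_length[OF w1b(1)] lw' by simp
    have l2: "length w2a < length w" using red_length[OF w2a(1)] lw' by simp
    have lv1: "length v1 < length w" using v(1) l1b red_length by fastforce
    have r1: "(red E)\<^sup>*\<^sup>* w1b m1" using v(1) m1(1)
      by (auto intro: converse_rtranclp_into_rtranclp)
    have r2: "(red E)\<^sup>*\<^sup>* w2a m2" using v(2) m2(1)
      by (auto intro: converse_rtranclp_into_rtranclp)
    have "csim E n m1" using less(1)[OF l1 w1b(2) w1a(2) less(4) r1 m1(2)] .
    moreover have "csim E m1 m2" using less(1)[OF lv1 v(3) m1 m2] .
    moreover have "csim E n' m2" using less(1)[OF l2 _ w2a(2) less(6) r2 m2(2)] by simp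
    moreover have "csim E m2 n'" using csim_sym[of E, OF sym] calculation(3) by blast
    ultimately show ?thesis by (meson rtranclp_trans)
  qed
qed



definition stepR :: "('a \<Rightarrow> 'a \<Rightarrow> bool) \<Rightarrow> ('a letter list \<times> 'a letter list) set" where
  "stepR E = {(a, b). pc_step E a b} \<union> {(a, b). pc_step E b a}"

definition eqv :: "('a \<Rightarrow> 'a \<Rightarrow> bool) \<Rightarrow> 'a letter list \<Rightarrow> 'a letter list \<Rightarrow> bool" where
  "eqv E u v \<longleftrightarrow> (u, v) \<in> (stepR E)\<^sup>*"

lemma eqv_refl[simp]: "eqv E u u" by (simp add: eqv_def)

lemma sym_stepR: "sym (stepR E)" unfolding stepR_def sym_def by auto

lemma eqv_sym: "eqv E u v \<Longrightarrow> eqv E v u"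
  unfolding eqv_def using sym_rtrancl[OF sym_stepR] by (auto simp: sym_def)

lemma eqv_trans[trans]: "eqv E u v \<Longrightarrow> eqv E v w \<Longrightarrow> eqv E u w"
  unfolding eqv_def by simp

lemma pc_step_app: "pc_step E a b \<Longrightarrow> pc_step E (p @ a @ q) (p @ b @ q)"
proof (induction rule: pc_step.induct)
  case (cancel u x b v)
  show ?case using pc_step.cancel[of E "p @ u" x b "v @ q"] by simp
next
  case (commute x y u b c v)
  show ?case using pc_step.commute[of E x y "p @ u" b c "v @ q"] commute by simp
qed

lemma eqv_app: "eqv E a b \<Longrightarrow> eqv E (p @ a @ q) (p @ b @ q)"
  unfolding eqv_def
proof (induction rule: rtrancl_induct)
  case base then show ?case by simp
next
  case (step y z)
  then have "(p @ y @ q, p @ z @ q) \<in> stepR E" unfolding stepR_def using pc_step_app by blast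
  then show ?case by (rule rtrancl_into_rtrancl[OF step(3)])
qed

lemma eqv_step: "pc_step E a b \<Longrightarrow> eqv E a b"
  unfolding eqv_def stepR_def by blast

lemma eqv_cancel: "eqv E (p @ [(x, c), (x, \<not> c)] @ q) (p @ q)"
  by (rule eqv_step) (rule pc_step.cancel)

lemma sw_eqv: assumes "sw E u v" shows "eqv E u v"
proof -
  from assms obtain p where p: "swI E u p" "v = swp u p" by (auto simp: sw_def)
  then have pl: "Suc p < length u" and Ep: "E (fst (u!p)) (fst (u!Suc p))" by (auto simp: swI_def)
  define q where "q = take p u"
  define r where "r = drop (Suc (Suc p)) u"
  have u: "u = q @ [u!p, u!Suc p] @ r" unfolding q_def r_def using pl
    by (metis Cons_nth_drop_Suc Suc_lessD append_Cons append_Nil append_take_drop_id)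
  have lq: "length q = p" unfolding q_def using pl by simp
  have v: "v = q @ [u!Suc p, u!p] @ r"
  proof -
    have "v = swp (q @ [u!p, u!Suc p] @ r) p" using p(2) u by metis
    also have "\<dots> = q @ [u!Suc p, u!p] @ r" unfolding swp_def using lq
      by (simp add: list_update_append nth_append)
    finally show ?thesis .
  qed
  have "pc_step E (q @ [(fst (u!p), snd (u!p)), (fst (u!Suc p), snd (u!Suc p))] @ r)
                  (q @ [(fst (u!Suc p), snd (u!Suc p)), (fst (u!p), snd (u!p))] @ r)"
    using Ep by (rule pc_step.commute)
  then show ?thesis using u v by (simp add: eqv_step)
qed

lemma csim_eqv: "csim E u v \<Longrightarrow> eqv E u v"
  by (induction rule: rtranclp_induct) (auto intro: eqv_trans sw_eqv)

lemma csim_eqv_move: "(\<forall>m\<in>set M. E (fst a) (fst m)) \<Longrightarrow> eqv E (p @ a # M @ q) (p @ M @ a # q)"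
  by (rule csim_eqv) (rule csim_move)

lemma decomp2:
  assumes "i < j" "j < length w"
  shows "w = take i w @ w!i # take (j - Suc i) (drop (Suc i) w) @ w!j # drop (Suc j) w"
proof -
  have "take j w = take (Suc i + (j - Suc i)) w" using assms by simp
  also have "\<dots> = take (Suc i) w @ take (j - Suc i) (drop (Suc i) w)" by (rule take_add)
  also have "take (Suc i) w = take i w @ [w!i]" using assms by (simp add: take_Suc_conv_app_nth)
  finally have tj: "take j w = take i w @ w!i # take (j - Suc i) (drop (Suc i) w)" by simp
  have dj: "drop j w = w!j # drop (Suc j) w" using assms by (simp add: Cons_nth_drop_Suc)
  show ?thesis using append_take_drop_id[of j w] unfolding tj dj by simp
qed

lemma red_eqv: assumes "red E u v" shows "eqv E u v"
proof -
  from assms obtain i j where c: "cancI E u i j" and v: "v = rem u i j" by (auto simp: red_def)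
  from c have ij: "i < j" "j < length u" and cj: "u!j = (fst (u!i), \<not> snd (u!i))"
    and b: "\<And>m. i < m \<Longrightarrow> m < j \<Longrightarrow> E (fst (u!i)) (fst (u!m))" by (auto simp: cancI_def prod_eq_iff)
  define A where "A = take (j - Suc i) (drop (Suc i) u)"
  have u: "u = take i u @ u!i # A @ u!j # drop (Suc j) u" unfolding A_def by (rule decomp2[OF ij])
  have "\<forall>m\<in>set A. E (fst (u!i)) (fst m)"
  proof
    fix m assume "m \<in> set A"
    then obtain t where "t < length A" "m = A ! t" by (auto simp: in_set_conv_nth)
    then show "E (fst (u!i)) (fst m)" unfolding A_def using ij by (auto intro!: b)
  qed
  then have "eqv E (take i u @ u!i # A @ (u!j # drop (Suc j) u)) (take i u @ A @ u!i # (u!j # drop (Suc j) u))"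
    by (rule csim_eqv_move)
  also have "take i u @ A @ u!i # (u!j # drop (Suc j) u) = (take i u @ A) @ [(fst (u!i), snd (u!i)), (fst (u!i), \<not> snd (u!i))] @ drop (Suc j) u"
    using cj by simp
  also have "eqv E \<dots> ((take i u @ A) @ drop (Suc j) u)" by (rule eqv_cancel)
  also have "(take i u @ A) @ drop (Suc j) u = v" unfolding v rem_def A_def by simp
  finally show ?thesis using u by simp
qed

lemma red_star_eqv: "(red E)\<^sup>*\<^sup>* u v \<Longrightarrow> eqv E u v"
  by (induction rule: rtranclp_induct) (auto intro: eqv_trans red_eqv)

lemma red_set: "red E u v \<Longrightarrow> set v \<subseteq> set u"
  unfolding red_def rem_def using set_take_subset set_drop_subset
  by (smt (verit, ccfv_threshold) Un_iff set_append subset_eq set_drop_subset set_take_subset)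

lemma red_star_set: "(red E)\<^sup>*\<^sup>* u v \<Longrightarrow> set v \<subseteq> set u"
  by (induction rule: rtranclp_induct) (auto dest: red_set)

lemma cancel_red: "red E (u @ [(x, c), (x, \<not> c)] @ v) (u @ v)"
proof -
  have "cancI E (u @ [(x, c), (x, \<not> c)] @ v) (length u) (Suc (length u))"
    unfolding cancI_def by (auto simp: nth_append)
  moreover have "rem (u @ [(x, c), (x, \<not> c)] @ v) (length u) (Suc (length u)) = u @ v"
    unfolding rem_def by simp
  ultimately show ?thesis unfolding red_def by metis
qed

lemma U:
  assumes sym: "\<And>x y. E x y \<Longrightarrow> E y x" and ir: "\<And>x. \<not> E x x"
    and e: "eqv E u v" and iu: "irr E u" and iv: "irr E v"
  shows "csim E u v"
proof -
  define J where "J = (\<lambda>a b. \<forall>n n'. (red E)\<^sup>*\<^sup>* a n \<longrightarrow> irr E n \<longrightarrow> (red E)\<^sup>*\<^sup>* b n' \<longrightarrow> irr E n' \<longrightarrow> csim E n n')"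
  have Jsym: "J b a" if "J a b" for a b
    using that csim_sym[of E, OF sym] unfolding J_def by blast
  have Jstep: "J a b" if "pc_step E a b" for a b
    using that
  proof cases
    case (cancel u x c v)
    then have r: "red E a b" using cancel_red by simp
    show ?thesis unfolding J_def
    proof (intro allI impI)
      fix n n' assume "(red E)\<^sup>*\<^sup>* a n" "irr E n" "(red E)\<^sup>*\<^sup>* b n'" "irr E n'"
      moreover have "(red E)\<^sup>*\<^sup>* a n'" using r \<open>(red E)\<^sup>*\<^sup>* b n'\<close> by (rule converse_rtranclp_into_rtranclp)
      ultimately show "csim E n n'" using Q[where E=E, OF sym ir, where w=a and w'=a] by blast
    qed
  next
    case (commute x y u c d v)
    then have "sw E a b" using sw_app[of E "(x,c)" "(y,d)" u v] by simp
    then have "csim E a b" by (rule r_into_rtranclp)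
    then show ?thesis unfolding J_def using Q[where E=E, OF sym ir] by blast
  qed
  have "J u v" using e unfolding eqv_def
  proof (induction rule: rtrancl_induct)
    case base then show ?case unfolding J_def using Q[where E=E, OF sym ir, where w=u and w'=u] by blast
  next
    case (step y z)
    have Jyz: "J y z" using step(2) Jstep Jsym unfolding stepR_def by blast
    show ?case unfolding J_def
    proof (intro allI impI)
      fix n n' assume h: "(red E)\<^sup>*\<^sup>* u n" "irr E n" "(red E)\<^sup>*\<^sup>* z n'" "irr E n'"
      obtain m where m: "(red E)\<^sup>*\<^sup>* y m" "irr E m" using nf_exists by blast
      have "csim E n m" using step(3) h m unfolding J_def by blast
      moreover have "csim E m n'" using Jyz h m unfolding J_def by blast
      ultimately show "csim E n n'" by (rule rtranclp_trans)
    qed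
  qed
  then show ?thesis unfolding J_def using iu iv by blast
qed



definition linv :: "'a letter \<Rightarrow> 'a letter" where "linv l = (fst l, \<not> snd l)"

lemma eqv_L1: "eqv E (u @ [l, linv l] @ q) (u @ q)"
  using eqv_cancel[of E u "fst l" "snd l" q] by (simp add: linv_def)

lemma eqv_L2: "eqv E (u @ [linv l, l] @ q) (u @ q)"
  using eqv_cancel[of E u "fst l" "\<not> snd l" q] by (simp add: linv_def)

lemma eqv_rcancel: assumes "eqv E (u @ [l]) (v @ [l])" shows "eqv E u v"
proof -
  have "eqv E u (u @ [l, linv l])" using eqv_L1[of E u l "[]"] eqv_sym by simp
  also have "eqv E (u @ [l, linv l]) (v @ [l, linv l])" using eqv_app[OF assms, of "[]" "[linv l]"] by simp
  also have "eqv E (v @ [l, linv l]) v" using eqv_L1[of E v l "[]"] by simp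
  finally show ?thesis .
qed

lemma eqv_lcancel: assumes "eqv E (l # u) (l # v)" shows "eqv E u v"
proof -
  have "eqv E u (linv l # l # u)" using eqv_L2[of E "[]" l u] eqv_sym by simp
  also have "eqv E (linv l # l # u) (linv l # l # v)" using eqv_app[OF assms, of "[linv l]" "[]"] by simp
  also have "eqv E (linv l # l # v) v" using eqv_L2[of E "[]" l v] by simp
  finally show ?thesis .
qed

lemma irr_csim:
  assumes sym: "\<And>x y. E x y \<Longrightarrow> E y x" and ir: "\<And>x. \<not> E x x"
    and "csim E u v" "irr E u" shows "irr E v"
proof (rule ccontr)
  assume "\<not> irr E v"
  then obtain x where "red E v x" by (auto simp: irr_red)
  from csim_red[where E=E, OF sym ir csim_sym[where E=E, OF sym assms(3)] this] assms(4) show False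
    by (auto simp: irr_red)
qed

lemma irr_prefix: "irr E (u @ [a]) \<Longrightarrow> irr E u"
proof -
  assume h: "irr E (u @ [a])"
  show "irr E u"
  proof (rule ccontr)
    assume "\<not> irr E u"
    then obtain i j where "cancI E u i j" by (auto simp: irr_def)
    then have "cancI E (u @ [a]) i j" unfolding cancI_def by (auto simp: nth_append)
    then show False using h by (auto simp: irr_def)
  qed
qed

lemma sw_list: assumes "sw E u v"
  shows "\<exists>q a b r. u = q @ [a, b] @ r \<and> v = q @ [b, a] @ r \<and> E (fst a) (fst b)"
proof -
  from assms obtain p where p: "swI E u p" "v = swp u p" by (auto simp: sw_def)
  then have pl: "Suc p < length u" and Ep: "E (fst (u!p)) (fst (u!Suc p))" by (auto simp: swI_def)
  define q where "q = take p u"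
  define r where "r = drop (Suc (Suc p)) u"
  have u: "u = q @ [u!p, u!Suc p] @ r" unfolding q_def r_def using pl
    by (metis Cons_nth_drop_Suc Suc_lessD append_Cons append_Nil append_take_drop_id)
  have lq: "length q = p" unfolding q_def using pl by simp
  have v: "v = q @ [u!Suc p, u!p] @ r"
  proof -
    have "v = swp (q @ [u!p, u!Suc p] @ r) p" using p(2) u by metis
    also have "\<dots> = q @ [u!Suc p, u!p] @ r" unfolding swp_def using lq
      by (simp add: list_update_append nth_append)
    finally show ?thesis .
  qed
  show ?thesis using u v Ep by blast
qed

lemma filter_csim:
  assumes "csim E u v" and P: "\<And>a b. P a \<Longrightarrow> P b \<Longrightarrow> \<not> E (fst a) (fst b)"
  shows "filter P u = filter P v"
  using assms(1)
proof induction
  case base then show ?case by simp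
next
  case (step y z)
  from sw_list[OF step(2)] obtain q a b r where
    "y = q @ [a, b] @ r" "z = q @ [b, a] @ r" "E (fst a) (fst b)" by blast
  moreover have "\<not> (P a \<and> P b)" using P \<open>E (fst a) (fst b)\<close> by blast
  ultimately have "filter P y = filter P z" by auto
  then show ?case using step(3) by simp
qed

lemma snoc_eq_cons: "xs @ [a] = a # xs \<Longrightarrow> set xs \<subseteq> {a}"
proof (induction xs)
  case Nil then show ?case by simp
next
  case (Cons x xs)
  then have "x = a" "xs @ [a] = x # xs" by auto
  then show ?case using Cons.IH by auto
qed

lemma lemmaS:
  assumes sym: "\<And>x y. E x y \<Longrightarrow> E y x" and ir: "\<And>x. \<not> E x x"
  shows "irr E w \<Longrightarrow> eqv E (w @ [(y, True)]) ((y, True) # w) \<Longrightarrow> \<forall>m\<in>set w. fst m = y \<or> E (fst m) y"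
proof (induction "length w" arbitrary: w rule: less_induct)
  case less
  define l where "l = (y, True)"
  have lv: "linv l = (y, False)" unfolding l_def linv_def by simp
  have aux: "length (take i w @ drop (Suc i) w) < length w"
            "w = take i w @ w!i # drop (Suc i) w"
            "set w = insert (w!i) (set (take i w @ drop (Suc i) w))" if "i < length w" for i
  proof -
    show "length (take i w @ drop (Suc i) w) < length w" using that by simp
    show w: "w = take i w @ w!i # drop (Suc i) w" using that by (simp add: id_take_nth_drop)
    show "set w = insert (w!i) (set (take i w @ drop (Suc i) w))"
      by (subst w) auto
  qed
  show ?case
  proof (cases "\<exists>i<length w. fst (w!i) = y \<and> (\<forall>k. i < k \<and> k < length w \<longrightarrow> E y (fst (w!k)))")
    case True
    then obtain i where i: "i < length w" "fst (w!i) = y" "\<And>k. i < k \<Longrightarrow> k < length w \<Longrightarrow> E y (fst (w!k))"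
      by blast
    define w' where "w' = take i w @ drop (Suc i) w"
    define a where "a = w!i"
    have "\<forall>m\<in>set (drop (Suc i) w). E (fst a) (fst m)"
    proof
      fix m assume "m \<in> set (drop (Suc i) w)"
      then obtain t where "t < length (drop (Suc i) w)" "m = drop (Suc i) w ! t" by (auto simp: in_set_conv_nth)
      then show "E (fst a) (fst m)" unfolding a_def using i by auto
    qed
    from csim_move[where E=E and p="take i w" and q="[]", OF this]
    have cs: "csim E w (w' @ [a])" using aux(2)[OF i(1)] unfolding w'_def a_def by simp
    have irw': "irr E w'" using irr_prefix irr_csim[where E=E, OF sym ir cs less(2)] by blast
    have ew: "eqv E w (w' @ [a])" using csim_eqv[OF cs] .
    have e1: "eqv E (w' @ [a] @ [l]) (l # w' @ [a])"
    proof -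
      have "eqv E (w' @ [a] @ [l]) (w @ [l])" using eqv_app[OF eqv_sym[OF ew], of "[]" "[l]"] by simp
      also have "eqv E (w @ [l]) (l # w)" using less(3) unfolding l_def .
      also have "eqv E (l # w) (l # w' @ [a])" using eqv_app[OF ew, of "[l]" "[]"] by simp
      finally show ?thesis .
    qed
    have "eqv E (w' @ [l]) (l # w')"
    proof (cases "snd a")
      case True
      then have "a = l" unfolding l_def using i(2) unfolding a_def by (simp add: prod_eq_iff)
      then show ?thesis using eqv_rcancel[of E "w' @ [l]" l "l # w'"] e1 by simp
    next
      case False
      then have al: "a = linv l" unfolding lv using i(2) unfolding a_def by (simp add: prod_eq_iff)
      have "eqv E w' (w' @ [linv l, l])" using eqv_L2[of E w' l "[]"] eqv_sym by simp
      also have "eqv E (w' @ [linv l, l]) (l # w' @ [linv l])" using e1 al by simp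
      finally have "eqv E w' (l # w' @ [linv l])" .
      from eqv_app[OF this, of "[]" "[l]"] have "eqv E (w' @ [l]) (l # w' @ [linv l, l])" by simp
      also have "eqv E (l # w' @ [linv l, l]) (l # w')" using eqv_L2[of E "l # w'" l "[]"] by simp
      finally show ?thesis .
    qed
    then have "\<forall>m\<in>set w'. fst m = y \<or> E (fst m) y"
      using less(1)[OF aux(1)[OF i(1), folded w'_def] irw'] unfolding l_def by blast
    then show ?thesis using aux(3)[OF i(1)] i(2) unfolding w'_def by auto
  next
    case nT: False
    show ?thesis
    proof (cases "\<exists>i<length w. fst (w!i) = y \<and> (\<forall>k. k < i \<longrightarrow> E y (fst (w!k)))")
      case True
      then obtain i where i: "i < length w" "fst (w!i) = y" "\<And>k. k < i \<Longrightarrow> E y (fst (w!k))"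
        by blast
      define w' where "w' = take i w @ drop (Suc i) w"
      define a where "a = w!i"
      have "\<forall>m\<in>set (take i w). E (fst a) (fst m)"
      proof
        fix m assume "m \<in> set (take i w)"
        then obtain t where "t < length (take i w)" "m = take i w ! t" by (auto simp: in_set_conv_nth)
        then show "E (fst a) (fst m)" unfolding a_def using i by auto
      qed
      from csim_move[where E=E and p="[]" and q="drop (Suc i) w", OF this]
      have cs0: "csim E (a # w') w" using aux(2)[OF i(1)] unfolding w'_def a_def by simp
      have cs: "csim E w (a # w')" using csim_sym[where E=E, OF sym cs0] .
      have irw': "irr E w'"
      proof -
        have ia: "irr E (a # w')" using irr_csim[where E=E, OF sym ir cs less(2)] .
        show ?thesis
        proof (rule ccontr)
          assume "\<not> irr E w'"
          then obtain i j where "cancI E w' i j" by (auto simp: irr_def)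
          then have "cancI E (a # w') (Suc i) (Suc j)" unfolding cancI_def
            by (auto simp: less_Suc_eq_0_disj)
          then show False using ia by (auto simp: irr_def)
        qed
      qed
      have ew: "eqv E w (a # w')" using csim_eqv[OF cs] .
      have e1: "eqv E (a # w' @ [l]) (l # a # w')"
      proof -
        have "eqv E (a # w' @ [l]) (w @ [l])" using eqv_app[OF eqv_sym[OF ew], of "[]" "[l]"] by simp
        also have "eqv E (w @ [l]) (l # w)" using less(3) unfolding l_def .
        also have "eqv E (l # w) (l # a # w')" using eqv_app[OF ew, of "[l]" "[]"] by simp
        finally show ?thesis .
      qed
      have "eqv E (w' @ [l]) (l # w')"
      proof (cases "snd a")
        case True
        then have "a = l" unfolding l_def using i(2) unfolding a_def by (simp add: prod_eq_iff)
        then show ?thesis using eqv_lcancel[of E l "w' @ [l]" "l # w'"] e1 by simp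
      next
        case False
        then have al: "a = linv l" unfolding lv using i(2) unfolding a_def by (simp add: prod_eq_iff)
        have "eqv E (linv l # w' @ [l]) (l # linv l # w')" using e1 al by simp
        also have "eqv E (l # linv l # w') w'" using eqv_L1[of E "[]" l w'] by simp
        finally have "eqv E (l # linv l # w' @ [l]) (l # w')" using eqv_app[of E _ w' "[l]" "[]"] by simp
        then have "eqv E (w' @ [l]) (l # w')"
          using eqv_trans[OF eqv_sym[OF eqv_L1[of E "[]" l "w' @ [l]"]]] by simp
        then show ?thesis .
      qed
      then have "\<forall>m\<in>set w'. fst m = y \<or> E (fst m) y"
        using less(1)[OF aux(1)[OF i(1), folded w'_def] irw'] unfolding l_def by blast
      then show ?thesis using aux(3)[OF i(1)] i(2) unfolding w'_def by auto
    next
      case nF: False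
      have i1: "irr E (w @ [l])"
      proof (rule ccontr)
        assume "\<not> irr E (w @ [l])"
        then obtain i j where c: "cancI E (w @ [l]) i j" by (auto simp: irr_def)
        show False
        proof (cases "j < length w")
          case True
          then have "cancI E w i j" using c unfolding cancI_def by (auto simp: nth_append)
          then show False using less(2) by (auto simp: irr_def)
        next
          case False
          then have j: "j = length w" using c by (auto simp: cancI_def)
          then have "i < length w" "fst (w!i) = y" "\<forall>k. i < k \<and> k < length w \<longrightarrow> E y (fst (w!k))"
            using c unfolding cancI_def l_def by (auto simp: nth_append)
          then show False using nT by blast
        qed
      qed
      have i2: "irr E (l # w)"
      proof (rule ccontr)
        assume "\<not> irr E (l # w)"
        then obtain i j where c: "cancI E (l # w) i j" by (auto simp: irr_def)
        show False
        proof (cases i)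
          case (Suc i')
          then obtain j' where j': "j = Suc j'" using c by (cases j) (auto simp: cancI_def)
          have "cancI E w i' j'" using c unfolding cancI_def Suc j'
          proof (intro conjI allI impI)
            fix k assume "i' < k \<and> k < j'"
            moreover assume "Suc i' < Suc j' \<and> Suc j' < length (l # w) \<and>
              fst ((l # w) ! Suc j') = fst ((l # w) ! Suc i') \<and>
              snd ((l # w) ! Suc j') = (\<not> snd ((l # w) ! Suc i')) \<and>
              (\<forall>k. Suc i' < k \<and> k < Suc j' \<longrightarrow> E (fst ((l # w) ! Suc i')) (fst ((l # w) ! k)))"
            ultimately show "E (fst (w ! i')) (fst (w ! k))" by (metis Suc_less_eq nth_Cons_Suc)
          qed auto
          then show False using less(2) by (auto simp: irr_def)
        next
          case 0
          then obtain j' where j': "j = Suc j'" using c by (cases j) (auto simp: cancI_def)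
          have "j' < length w" "fst (w!j') = y" using c 0 j' unfolding cancI_def l_def by auto
          moreover have "E y (fst (w!k))" if "k < j'" for k
          proof -
            have "\<forall>k. 0 < k \<and> k < Suc j' \<longrightarrow> E (fst l) (fst ((l # w) ! k))"
              using c 0 j' unfolding cancI_def by simp
            then have "E (fst l) (fst ((l # w) ! Suc k))" using that by blast
            then show ?thesis by (simp add: l_def)
          qed
          ultimately show False using nF by blast
        qed
      qed
      have cs: "csim E (w @ [l]) (l # w)" using U[where E=E, OF sym ir _ i1 i2] less(3) unfolding l_def by simp
      show ?thesis
      proof
        fix m assume m: "m \<in> set w"
        show "fst m = y \<or> E (fst m) y"
        proof (rule ccontr)
          assume h: "\<not> (fst m = y \<or> E (fst m) y)"
          define z where "z = fst m"
          define P where "P = (\<lambda>b :: 'a letter. fst b = y \<or> fst b = z)"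
          have "\<not> E (fst a) (fst b)" if "P a" "P b" for a b
          proof -
            have nyz: "\<not> E y z" "\<not> E z y" "\<not> E y y" "\<not> E z z"
              using h ir sym[of y z] unfolding z_def by auto
            show ?thesis using that nyz unfolding P_def by auto
          qed
          then have "filter P (w @ [l]) = filter P (l # w)" using filter_csim[OF cs] by blast
          then have "filter P w @ [l] = l # filter P w" unfolding P_def l_def by simp
          then have "set (filter P w) \<subseteq> {l}" by (rule snoc_eq_cons)
          moreover have "m \<in> set (filter P w)" using m unfolding P_def z_def by simp
          ultimately have "m = l" by blast
          then show False using h unfolding l_def by simp
        qed
      qed
    qed
  qed
qed



lemma cent_anti: "B \<subseteq> A \<Longrightarrow> centraliser G A \<subseteq> centraliser G B"
  unfolding centraliser_def by auto

lemma cent_Un: "centraliser G (A \<union> B) = centraliser G A \<inter> centraliser G B"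
  unfolding centraliser_def by auto

lemma cent_carrier: "centraliser G A \<subseteq> carrier G"
  unfolding centraliser_def by auto

lemma cjoin_eq:
  assumes "A \<union> B \<subseteq> carrier G"
  shows "cjoin G A B = centraliser G (centraliser G (A \<union> B))"
proof -
  let ?M = "A \<union> B"
  let ?D = "centraliser G (centraliser G ?M)"
  have MD: "?M \<subseteq> ?D" using assms unfolding centraliser_def by auto
  have Din: "?D \<in> {C \<in> centraliser_lattice G. A \<subseteq> C \<and> B \<subseteq> C}"
    using MD cent_carrier[of G ?M] unfolding centraliser_lattice_def by blast
  have "?D \<subseteq> C" if "C \<in> {C \<in> centraliser_lattice G. A \<subseteq> C \<and> B \<subseteq> C}" for C
  proof -
    from that obtain S where S: "S \<subseteq> carrier G" "C = centraliser G S" "?M \<subseteq> C"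
      unfolding centraliser_lattice_def by blast
    then have "S \<subseteq> centraliser G ?M" unfolding centraliser_def by auto
    then show ?thesis using S(2) by (simp add: cent_anti)
  qed
  then show ?thesis unfolding cjoin_def using Din by blast
qed

lemma pc_rel_eq: "pc_rel X E = {(u, v). u \<in> pc_words X \<and> v \<in> pc_words X \<and> eqv E u v}"
  unfolding pc_rel_def eqv_def stepR_def by simp

lemma words_iff: "u \<in> pc_words X \<longleftrightarrow> (\<forall>m\<in>set u. fst m \<in> X)"
  unfolding pc_words_def by (auto simp: lists_eq_set mem_Times_iff)

lemma rel_mem: "(u, v) \<in> pc_rel X E \<longleftrightarrow> u \<in> pc_words X \<and> v \<in> pc_words X \<and> eqv E u v"
  by (simp add: pc_rel_eq)

lemma app_words: "u \<in> pc_words X \<Longrightarrow> v \<in> pc_words X \<Longrightarrow> u @ v \<in> pc_words X"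
  unfolding pc_words_def by simp

lemma cls_eq: assumes "u \<in> pc_words X" "v \<in> pc_words X"
  shows "pc_rel X E `` {u} = pc_rel X E `` {v} \<longleftrightarrow> eqv E u v"
proof
  assume h: "pc_rel X E `` {u} = pc_rel X E `` {v}"
  have "v \<in> pc_rel X E `` {v}" using assms by (simp add: rel_mem)
  then have "v \<in> pc_rel X E `` {u}" using h by simp
  then show "eqv E u v" by (simp add: rel_mem)
next
  assume e: "eqv E u v"
  show "pc_rel X E `` {u} = pc_rel X E `` {v}"
  proof -
    have "eqv E u x \<longleftrightarrow> eqv E v x" for x
      using e eqv_sym[of E] eqv_trans[of E] by meson
    then show ?thesis using assms by (auto simp: pc_rel_eq)
  qed
qed

lemma carrier_pc: "carrier (pc_group X E) = (\<lambda>u. pc_rel X E `` {u}) ` pc_words X"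
  unfolding pc_group_def quotient_def by auto

lemma mult_pc: assumes "u \<in> pc_words X" "v \<in> pc_words X"
  shows "pc_rel X E `` {u} \<otimes>\<^bsub>pc_group X E\<^esub> pc_rel X E `` {v} = pc_rel X E `` {u @ v}"
proof -
  let ?u = "SOME u'. u' \<in> pc_rel X E `` {u}"
  let ?v = "SOME v'. v' \<in> pc_rel X E `` {v}"
  have "?u \<in> pc_rel X E `` {u}" by (rule someI[of _ u]) (use assms in \<open>simp add: pc_rel_eq\<close>)
  then have u': "?u \<in> pc_words X" "eqv E u ?u" by (auto simp: rel_mem)
  have "?v \<in> pc_rel X E `` {v}" by (rule someI[of _ v]) (use assms in \<open>simp add: pc_rel_eq\<close>)
  then have v': "?v \<in> pc_words X" "eqv E v ?v" by (auto simp: rel_mem)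
  have "eqv E (u @ v) (?u @ v)" using eqv_app[OF u'(2), of "[]" v] by simp
  also have "eqv E (?u @ v) (?u @ ?v)" using eqv_app[OF v'(2), of ?u "[]"] by simp
  finally have e: "eqv E (u @ v) (?u @ ?v)" .
  have w: "u @ v \<in> pc_words X" "?u @ ?v \<in> pc_words X" using assms u' v' by (auto intro: app_words)
  have m: "pc_rel X E `` {u} \<otimes>\<^bsub>pc_group X E\<^esub> pc_rel X E `` {v} = pc_rel X E `` {?u @ ?v}"
    unfolding pc_group_def by simp
  have "pc_rel X E `` {?u @ ?v} = pc_rel X E `` {u @ v}" using cls_eq[OF w(2) w(1)] eqv_sym[OF e] by blast
  then show ?thesis using m by simp
qed

definition Sub :: "'a set \<Rightarrow> ('a \<Rightarrow> 'a \<Rightarrow> bool) \<Rightarrow> 'a set \<Rightarrow> 'a letter list set set" where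
  "Sub X E T = (\<lambda>u. pc_rel X E `` {u}) ` lists (T \<times> UNIV)"

definition st :: "'a set \<Rightarrow> ('a \<Rightarrow> 'a \<Rightarrow> bool) \<Rightarrow> 'a set \<Rightarrow> 'a set" where
  "st X E Y = {x \<in> X. \<forall>y\<in>Y. x = y \<or> E x y}"

lemma comm_star:
  "(\<forall>m\<in>set u. fst m = y \<or> E (fst m) y) \<Longrightarrow> eqv E (u @ [(y, c)]) ((y, c) # u)"
proof (induction u)
  case Nil then show ?case by simp
next
  case (Cons m u)
  have "eqv E (m # u @ [(y, c)]) (m # (y, c) # u)" using eqv_app[OF Cons.IH, of "[m]" "[]"] Cons.prems by simp
  also have "eqv E (m # (y, c) # u) ((y, c) # m # u)"
  proof -
    consider "E (fst m) y" | "m = (y, c)" | "m = (y, \<not> c)" using Cons.prems by (cases m) auto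
    then show ?thesis
    proof cases
      case 1
      then show ?thesis using eqv_step[OF pc_step.commute[of E "fst m" y "[]" "snd m" c u]] by simp
    next
      case 2 then show ?thesis by simp
    next
      case 3
      have "eqv E (m # (y, c) # u) u" using eqv_L2[of E "[]" "(y, c)" u] 3 by (simp add: linv_def)
      also have "eqv E u ((y, c) # m # u)" using eqv_sym[OF eqv_L1[of E "[]" "(y, c)" u]] 3 by (simp add: linv_def)
      finally show ?thesis .
    qed
  qed
  finally show ?case by simp
qed

lemma gen_in: "x \<in> X \<Longrightarrow> [(x, True)] \<in> pc_words X"
  by (simp add: words_iff)

lemma lemmaM:
  assumes sym: "\<And>x y. E x y \<Longrightarrow> E y x" and ir: "\<And>x. \<not> E x x" and Y: "Y \<subseteq> X"
  shows "canonical_centraliser X E Y = Sub X E (st X E Y)"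
proof
  show "canonical_centraliser X E Y \<subseteq> Sub X E (st X E Y)"
  proof
    fix g assume g: "g \<in> canonical_centraliser X E Y"
    then have "g \<in> carrier (pc_group X E)" unfolding canonical_centraliser_def centraliser_def by auto
    then obtain w0 where w0: "w0 \<in> pc_words X" "g = pc_rel X E `` {w0}" by (auto simp: carrier_pc)
    obtain n where n: "(red E)\<^sup>*\<^sup>* w0 n" "irr E n" using nf_exists by blast
    have nw: "n \<in> pc_words X" using red_star_set[OF n(1)] w0(1) by (auto simp: words_iff)
    have gn: "g = pc_rel X E `` {n}" using w0 cls_eq[OF w0(1) nw] red_star_eqv[OF n(1)] by simp
    have "\<forall>m\<in>set n. fst m = y \<or> E (fst m) y" if y: "y \<in> Y" for y
    proof -
      have yw: "[(y, True)] \<in> pc_words X" using y Y by (auto simp: words_iff)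
      have "g \<otimes>\<^bsub>pc_group X E\<^esub> pc_gen X E y = pc_gen X E y \<otimes>\<^bsub>pc_group X E\<^esub> g"
        using g y unfolding canonical_centraliser_def centraliser_def by auto
      then have "pc_rel X E `` {n @ [(y, True)]} = pc_rel X E `` {[(y, True)] @ n}"
        unfolding gn pc_gen_def using mult_pc[OF nw yw] mult_pc[OF yw nw] by simp
      then have "eqv E (n @ [(y, True)]) ((y, True) # n)"
        using cls_eq[OF app_words[OF nw yw] app_words[OF yw nw]] by simp
      then show ?thesis using lemmaS[where E=E, OF sym ir n(2)] by blast
    qed
    then have "fst m \<in> st X E Y" if "m \<in> set n" for m
      using nw that unfolding st_def words_iff by blast
    then have "n \<in> lists (st X E Y \<times> UNIV)" by (auto simp: mem_Times_iff)
    then show "g \<in> Sub X E (st X E Y)" unfolding Sub_def gn by blast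
  qed
next
  show "Sub X E (st X E Y) \<subseteq> canonical_centraliser X E Y"
  proof
    fix g assume "g \<in> Sub X E (st X E Y)"
    then obtain u where u: "u \<in> lists (st X E Y \<times> UNIV)" "g = pc_rel X E `` {u}" unfolding Sub_def by blast
    have uw: "u \<in> pc_words X" using u(1) unfolding st_def by (auto simp: words_iff mem_Times_iff)
    have gc: "g \<in> carrier (pc_group X E)" using uw u(2) by (auto simp: carrier_pc)
    have "g \<otimes>\<^bsub>pc_group X E\<^esub> s = s \<otimes>\<^bsub>pc_group X E\<^esub> g" if "s \<in> pc_gen X E ` Y" for s
    proof -
      from that obtain y where y: "y \<in> Y" "s = pc_rel X E `` {[(y, True)]}" unfolding pc_gen_def by blast
      have yw: "[(y, True)] \<in> pc_words X" using y Y by (auto simp: words_iff)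
      have "\<forall>m\<in>set u. fst m = y \<or> E (fst m) y"
      proof
        fix m assume "m \<in> set u"
        then have "m \<in> st X E Y \<times> UNIV" using u(1) by (simp add: in_lists_conv_set)
        then have "fst m \<in> st X E Y" by (simp add: mem_Times_iff)
        then show "fst m = y \<or> E (fst m) y" using y(1) unfolding st_def by blast
      qed
      then have "eqv E (u @ [(y, True)]) ([(y, True)] @ u)" using comm_star by simp
      then have "pc_rel X E `` {u @ [(y, True)]} = pc_rel X E `` {[(y, True)] @ u}"
        using cls_eq[OF app_words[OF uw yw] app_words[OF yw uw]] by simp
      then show ?thesis unfolding u(2) y(2) using mult_pc[OF uw yw] mult_pc[OF yw uw] by simp
    qed
    then show "g \<in> canonical_centraliser X E Y" using gc
      unfolding canonical_centraliser_def centraliser_def by blast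
  qed
qed

lemma lemmaCS:
  assumes T: "T \<subseteq> X"
  shows "centraliser (pc_group X E) (Sub X E T) = canonical_centraliser X E T"
proof
  have "pc_gen X E ` T \<subseteq> Sub X E T" unfolding pc_gen_def Sub_def by auto
  then show "centraliser (pc_group X E) (Sub X E T) \<subseteq> canonical_centraliser X E T"
    unfolding canonical_centraliser_def by (rule cent_anti)
next
  show "canonical_centraliser X E T \<subseteq> centraliser (pc_group X E) (Sub X E T)"
  proof
    fix g assume g: "g \<in> canonical_centraliser X E T"
    then have "g \<in> carrier (pc_group X E)" unfolding canonical_centraliser_def centraliser_def by auto
    then obtain v where v: "v \<in> pc_words X" "g = pc_rel X E `` {v}" by (auto simp: carrier_pc)
    have gen: "eqv E (v @ [(t, True)]) ((t, True) # v)" if t: "t \<in> T" for t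
    proof -
      have tw: "[(t, True)] \<in> pc_words X" using t T by (auto simp: words_iff)
      have "g \<otimes>\<^bsub>pc_group X E\<^esub> pc_gen X E t = pc_gen X E t \<otimes>\<^bsub>pc_group X E\<^esub> g"
        using g t unfolding canonical_centraliser_def centraliser_def by auto
      then have "pc_rel X E `` {v @ [(t, True)]} = pc_rel X E `` {[(t, True)] @ v}"
        unfolding v(2) pc_gen_def using mult_pc[OF v(1) tw] mult_pc[OF tw v(1)] by simp
      then show ?thesis
        using cls_eq[OF app_words[OF v(1) tw] app_words[OF tw v(1)]] by simp
    qed
    have letter: "eqv E (v @ [l]) (l # v)" if "fst l \<in> T" for l
    proof (cases "snd l")
      case True
      obtain t where t: "l = (t, True)" using True by (cases l) auto
      then show ?thesis using gen[OF that] by simp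
    next
      case False
      define L where "L = (fst l, True)"
      have lL: "l = linv L" unfolding L_def linv_def using False by (simp add: prod_eq_iff)
      have "eqv E (l # v) (l # v @ [L, linv L])" using eqv_sym[OF eqv_L1[of E "l # v" L "[]"]] by simp
      also have "eqv E (l # v @ [L, linv L]) (l # L # v @ [linv L])"
        using eqv_app[OF gen[OF that], of "[l]" "[linv L]"] unfolding L_def by simp
      also have "eqv E (l # L # v @ [linv L]) (v @ [linv L])"
        using eqv_L2[of E "[]" L "v @ [linv L]"] lL by simp
      finally have "eqv E (l # v) (v @ [l])" using lL by simp
      then show ?thesis by (rule eqv_sym)
    qed
    have comm: "eqv E (v @ u) (u @ v)" if "u \<in> lists (T \<times> UNIV)" for u
      using that
    proof (induction u)
      case Nil then show ?case by simp
    next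
      case (Cons l u)
      have "eqv E (v @ [l] @ u) ((l # v) @ u)" using eqv_app[OF letter, of l "[]" u] Cons.hyps
        by (auto simp: mem_Times_iff)
      also have "eqv E ((l # v) @ u) (l # u @ v)" using eqv_app[OF Cons.IH, of "[l]" "[]"] by simp
      finally show ?case by simp
    qed
    have "g \<otimes>\<^bsub>pc_group X E\<^esub> s = s \<otimes>\<^bsub>pc_group X E\<^esub> g" if "s \<in> Sub X E T" for s
    proof -
      from that obtain u where u: "u \<in> lists (T \<times> UNIV)" "s = pc_rel X E `` {u}" unfolding Sub_def by blast
      have uw: "u \<in> pc_words X" using u(1) T by (auto simp: words_iff mem_Times_iff)
      have "pc_rel X E `` {v @ u} = pc_rel X E `` {u @ v}"
        using cls_eq[OF app_words[OF v(1) uw] app_words[OF uw v(1)]] comm[OF u(1)] by simp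
      then show ?thesis unfolding u(2) v(2) using mult_pc[OF uw v(1)] mult_pc[OF v(1) uw] by simp
    qed
    then show "g \<in> centraliser (pc_group X E) (Sub X E T)" using \<open>g \<in> carrier (pc_group X E)\<close>
      unfolding centraliser_def by blast
  qed
qed

theorem lemma3p1:
  fixes X :: "'a set" and E :: "'a \<Rightarrow> 'a \<Rightarrow> bool"
  assumes "finite X"
    and "\<And>x y. E x y \<Longrightarrow> x \<in> X \<and> y \<in> X"
    and "\<And>x y. E x y \<Longrightarrow> E y x"
    and "\<And>x. \<not> E x x"
    and "Y1 \<subseteq> X" and "Y2 \<subseteq> X"
  shows "(\<exists>Z \<subseteq> X. canonical_centraliser X E Y1 \<inter> canonical_centraliser X E Y2
                      = canonical_centraliser X E Z)
       \<and> (\<exists>Z \<subseteq> X. cjoin (pc_group X E) (canonical_centraliser X E Y1)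
                      (canonical_centraliser X E Y2) = canonical_centraliser X E Z)"
proof
  have meet: "canonical_centraliser X E A \<inter> canonical_centraliser X E B = canonical_centraliser X E (A \<union> B)" for A B
    unfolding canonical_centraliser_def by (simp add: image_Un cent_Un)
  show "\<exists>Z \<subseteq> X. canonical_centraliser X E Y1 \<inter> canonical_centraliser X E Y2 = canonical_centraliser X E Z"
    by (intro exI[of _ "Y1 \<union> Y2"] conjI) (use meet assms(5,6) in auto)
  have stX: "st X E Y \<subseteq> X" for Y unfolding st_def by auto
  have CC: "centraliser (pc_group X E) (canonical_centraliser X E Y) = canonical_centraliser X E (st X E Y)"
    if "Y \<subseteq> X" for Y
    using lemmaM[where E=E, OF assms(3) assms(4) that] lemmaCS[OF stX] by simp
  let ?A = "canonical_centraliser X E Y1" and ?B = "canonical_centraliser X E Y2"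
  let ?G = "pc_group X E"
  have sub: "?A \<union> ?B \<subseteq> carrier ?G" unfolding canonical_centraliser_def
    using cent_carrier[of "pc_group X E" "pc_gen X E ` Y1"] cent_carrier[of "pc_group X E" "pc_gen X E ` Y2"] by blast
  have j1: "cjoin ?G ?A ?B = centraliser ?G (centraliser ?G (?A \<union> ?B))"
    by (rule cjoin_eq[OF sub])
  have j2: "centraliser ?G (?A \<union> ?B) = centraliser ?G ?A \<inter> centraliser ?G ?B"
    by (rule cent_Un)
  have j3: "centraliser ?G ?A \<inter> centraliser ?G ?B = canonical_centraliser X E (st X E Y1 \<union> st X E Y2)"
    using CC[OF assms(5)] CC[OF assms(6)] meet by simp
  have s12: "st X E Y1 \<union> st X E Y2 \<subseteq> X" using stX by auto
  have j4: "centraliser ?G (canonical_centraliser X E (st X E Y1 \<union> st X E Y2)) = canonical_centraliser X E (st X E (st X E Y1 \<union> st X E Y2))"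
    by (rule CC[OF s12])
  have "cjoin ?G ?A ?B = canonical_centraliser X E (st X E (st X E Y1 \<union> st X E Y2))"
    unfolding j1 j2 j3 j4 ..
  then show "\<exists>Z \<subseteq> X. cjoin ?G ?A ?B = canonical_centraliser X E Z"
    by (intro exI[of _ "st X E (st X E Y1 \<union> st X E Y2)"] conjI stX)
qed

end
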